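(* Let $\psi(u,v)$ be a $C^2$ function on $\mathbb R^2$ and $g(x)=\psi(|x|^2,|x|_{-1}^2)$ for $x\in\mathbb R^N$. Then for every $\varepsilon>0$ and $x\in\mathbb R^N$, $$\widetilde{\mathcal L}^\varepsilon g(x)=\widetilde Lg(x)=2a\Big(\sum_\ell\lambda_\ell(1+\delta_\ell)x_\ell^2\,\partial_u^2\psi+2\sum_\ell(1+\delta_\ell)x_\ell^2\,\partial_u\partial_v\psi+\sum_\ell\tfrac1{\lambda_\ell}(1+\delta_\ell)x_\ell^2\,\partial_v^2\psi\Big)+\Big(a\sum_\ell\lambda_\ell(1+\delta_\ell)-2\sum_\ell\lambda_\ell x_\ell^2\Big)\partial_u\psi+\Big(a\sum_\ell(1+\delta_\ell)-2\sum_\ell x_\ell^2\Big)\partial_v\psi,$$ with derivatives of $\psi$ evaluated at $(u,v)=(|x|^2,|x|_{-1}^2)$. Moreover, if $g_0(x)=\exp\{|x|_{-1}^2/(2a)\}$, then for every $\varepsilon>0$ and $x\in\mathbb R^N$, $$\widetilde{\mathcal L}^\varepsilon g_0(x)\le-\frac{aN-|x|^2}{2a}\,e^{|x|_{-1}^2/2a}\le\frac N2e^{N/2}.$$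
   Context: Let $n\ge4$, $N=2n$, $1=\lambda_1=\lambda_2<\lambda_3=\lambda_4<\dots<\lambda_{N-1}=\lambda_N$. On $\mathbb R^N$: $\langle x,y\rangle=\sum x_\ell y_\ell$, $|x|^2=\sum x_\ell^2$, $\langle x,y\rangle_{-1}=\sum x_\ell y_\ell/\lambda_\ell$, $|x|_{-1}^2=\sum x_\ell^2/\lambda_\ell$. Fix $a>0$, $\delta_\ell\in(-1,0]$ with $\delta_{2i}=\delta_{2i-1}$, and $\widetilde L=\sum_\ell\lambda_\ell(\tfrac a2(1+\delta_\ell)\partial_\ell^2-x_\ell\partial_\ell)$. Let $b$ be a vector field on $\mathbb R^N$ with each $b(x)_\ell$ a quadratic form in $x$, $\operatorname{div}b=0$, $\langle x,b(x)\rangle=0=\langle x,b(x)\rangle_{-1}$ for all $x$; $B=\sum b(x)_\ell\partial_\ell$. With $\mathcal J$ the set of triples $J=(k,\ell,m)$ in $\{1,\dots,N\}$ with $\lambda_k<\lambda_\ell<\lambda_m$, let $T_J=\sum x_ax_b(1/\lambda_a-1/\lambda_b)\partial_c$ (sum over the three cyclic permutations $(a,b,c)$ of $J$), and $R_i=x_{2i}\partial_{2i-1}-x_{2i-1}\partial_{2i}$, $1\le i\le n$; enumerate these vector fields as $Z_1,\dots,Z_M$ and set $\mathcal D=\frac12\sum_mZ_m^2$. Fix $\kappa\in(0,1]$, and for $\varepsilon>0$ set $\widetilde{\mathcal L}^\varepsilon=\widetilde L+\varepsilon^{-1}(B+\kappa\mathcal D)$. *)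

theory Defs
  imports "HOL-Analysis.Analysis"
begin

text \<open>Points of R^N are represented as functions nat => real; only the
coordinates 1..N matter.  Vector fields are maps (component index) => point => real.\<close>

type_synonym pt = "nat \<Rightarrow> real"
type_synonym vfield = "nat \<Rightarrow> pt \<Rightarrow> real"

definition pd :: "nat \<Rightarrow> (pt \<Rightarrow> real) \<Rightarrow> pt \<Rightarrow> real" where
  "pd l f x = deriv (\<lambda>t. f (x(l := t))) (x l)"

definition sqn :: "nat \<Rightarrow> pt \<Rightarrow> real" where
  "sqn N x = (\<Sum>l\<in>{1..N}. (x l)\<^sup>2)"

definition sqnm1 :: "nat \<Rightarrow> (nat \<Rightarrow> real) \<Rightarrow> pt \<Rightarrow> real" where
  "sqnm1 N lam x = (\<Sum>l\<in>{1..N}. (x l)\<^sup>2 / lam l)"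

definition vf_apply :: "nat \<Rightarrow> vfield \<Rightarrow> (pt \<Rightarrow> real) \<Rightarrow> pt \<Rightarrow> real" where
  "vf_apply N Z f x = (\<Sum>c\<in>{1..N}. Z c x * pd c f x)"

definition Ltil :: "nat \<Rightarrow> (nat \<Rightarrow> real) \<Rightarrow> real \<Rightarrow> (nat \<Rightarrow> real) \<Rightarrow> (pt \<Rightarrow> real) \<Rightarrow> pt \<Rightarrow> real" where
  "Ltil N lam a delta f x =
     (\<Sum>l\<in>{1..N}. lam l * (a / 2 * (1 + delta l) * pd l (pd l f) x - x l * pd l f x))"

definition Tfield :: "(nat \<Rightarrow> real) \<Rightarrow> nat \<Rightarrow> nat \<Rightarrow> nat \<Rightarrow> vfield" where
  "Tfield lam k l m = (\<lambda>c x.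
      (if c = m then x k * x l * (1 / lam k - 1 / lam l) else 0)
    + (if c = k then x l * x m * (1 / lam l - 1 / lam m) else 0)
    + (if c = l then x m * x k * (1 / lam m - 1 / lam k) else 0))"

definition Rfield :: "nat \<Rightarrow> vfield" where
  "Rfield i = (\<lambda>c x. (if c = 2 * i - 1 then x (2 * i) else 0)
                    - (if c = 2 * i then x (2 * i - 1) else 0))"

definition Jset :: "nat \<Rightarrow> (nat \<Rightarrow> real) \<Rightarrow> (nat \<times> nat \<times> nat) set" where
  "Jset N lam = {(k, l, m). k \<in> {1..N} \<and> l \<in> {1..N} \<and> m \<in> {1..N} \<and> lam k < lam l \<and> lam l < lam m}"

definition Dop :: "nat \<Rightarrow> (nat \<Rightarrow> real) \<Rightarrow> (pt \<Rightarrow> real) \<Rightarrow> pt \<Rightarrow> real" where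
  "Dop n lam f x = 1 / 2 *
     ((\<Sum>(k, l, m)\<in>Jset (2 * n) lam.
          vf_apply (2 * n) (Tfield lam k l m) (vf_apply (2 * n) (Tfield lam k l m) f) x)
    + (\<Sum>i\<in>{1..n}. vf_apply (2 * n) (Rfield i) (vf_apply (2 * n) (Rfield i) f) x))"

definition Leps :: "nat \<Rightarrow> (nat \<Rightarrow> real) \<Rightarrow> real \<Rightarrow> (nat \<Rightarrow> real) \<Rightarrow> vfield \<Rightarrow> real \<Rightarrow> real
                     \<Rightarrow> (pt \<Rightarrow> real) \<Rightarrow> pt \<Rightarrow> real" where
  "Leps n lam a delta b kappa eps f x =
     Ltil (2 * n) lam a delta f x + (1 / eps) * (vf_apply (2 * n) b f x + kappa * Dop n lam f x)"

end

theory Submission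
  imports Defs
begin


lemma chain2:
  fixes F A B :: "real \<times> real \<Rightarrow> real"
  assumes F: "\<forall>p. (F has_derivative (\<lambda>(h, k). A p * h + B p * k)) (at p)"
    and u: "(u has_real_derivative u') (at t)" and v: "(v has_real_derivative v') (at t)"
  shows "((\<lambda>t. F (u t, v t)) has_real_derivative (A (u t, v t) * u' + B (u t, v t) * v')) (at t)"
proof -
  have uv: "((\<lambda>t. (u t, v t)) has_derivative (\<lambda>h. (u' * h, v' * h))) (at t)"
    using has_derivative_Pair[OF u[unfolded has_field_derivative_def] v[unfolded has_field_derivative_def]] .
  have "((\<lambda>t. F (u t, v t)) has_derivative ((\<lambda>(h, k). A (u t, v t) * h + B (u t, v t) * k) \<circ> (\<lambda>h. (u' * h, v' * h)))) (at t)"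
    using has_derivative_compose[OF uv F[rule_format, of "(u t, v t)"]] by (simp add: o_def)
  then show ?thesis unfolding has_field_derivative_def
    by (rule has_derivative_eq_rhs) (auto simp: fun_eq_iff algebra_simps)
qed

lemma sqn_upd: "l \<in> {1..N} \<Longrightarrow> sqn N (y(l:=t)) = sqn N y - (y l)^2 + t^2"
proof -
  assume l: "l \<in> {1..N}"
  have "sqn N (y(l:=t)) = t^2 + (\<Sum>j\<in>{1..N}-{l}. (y j)^2)"
    unfolding sqn_def using l by (subst sum.remove[of _ l]) auto
  moreover have "sqn N y = (y l)^2 + (\<Sum>j\<in>{1..N}-{l}. (y j)^2)"
    unfolding sqn_def using l by (subst sum.remove[of _ l]) auto
  ultimately show ?thesis by simp
qed

lemma sqnm1_upd: "l \<in> {1..N} \<Longrightarrow> sqnm1 N lam (y(l:=t)) = sqnm1 N lam y - (y l)^2 / lam l + t^2 / lam l"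
proof -
  assume l: "l \<in> {1..N}"
  have "sqnm1 N lam (y(l:=t)) = t^2 / lam l + (\<Sum>j\<in>{1..N}-{l}. (y j)^2 / lam j)"
    unfolding sqnm1_def using l by (subst sum.remove[of _ l]) auto
  moreover have "sqnm1 N lam y = (y l)^2 / lam l + (\<Sum>j\<in>{1..N}-{l}. (y j)^2 / lam j)"
    unfolding sqnm1_def using l by (subst sum.remove[of _ l]) auto
  ultimately show ?thesis by simp
qed

lemma pd_g:
  fixes psi psi_u psi_v :: "real \<times> real \<Rightarrow> real"
  assumes psi_d: "\<forall>p. (psi has_derivative (\<lambda>(h, k). psi_u p * h + psi_v p * k)) (at p)"
    and l: "l \<in> {1..N}" and lnz: "lam l \<noteq> 0"
  shows "pd l (\<lambda>y. psi (sqn N y, sqnm1 N lam y)) y =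
     2 * y l * (psi_u (sqn N y, sqnm1 N lam y) + psi_v (sqn N y, sqnm1 N lam y) / lam l)"
proof -
  define S0 where "S0 = sqn N y - (y l)^2"
  define S1 where "S1 = sqnm1 N lam y - (y l)^2 / lam l"
  have eq: "(\<lambda>t. psi (sqn N (y(l:=t)), sqnm1 N lam (y(l:=t)))) = (\<lambda>t. psi (S0 + t^2, S1 + t^2 / lam l))"
    using l by (simp add: sqn_upd sqnm1_upd S0_def S1_def algebra_simps)
  have "((\<lambda>t. psi (S0 + t^2, S1 + t^2 / lam l)) has_real_derivative
     (psi_u (S0 + (y l)^2, S1 + (y l)^2 / lam l) * (2 * y l) + psi_v (S0 + (y l)^2, S1 + (y l)^2 / lam l) * (2 * y l / lam l))) (at (y l))"
    by (rule chain2[OF psi_d]) (auto intro!: derivative_eq_intros simp: lnz)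
  then show ?thesis unfolding pd_def eq
    by (subst DERIV_imp_deriv) (auto simp: S0_def S1_def algebra_simps)
qed

lemma pdpd_g:
  fixes psi psi_u psi_v psi_uu psi_uv psi_vu psi_vv :: "real \<times> real \<Rightarrow> real"
  assumes psi_d: "\<forall>p. (psi has_derivative (\<lambda>(h, k). psi_u p * h + psi_v p * k)) (at p)"
    and psi_u_d: "\<forall>p. (psi_u has_derivative (\<lambda>(h, k). psi_uu p * h + psi_uv p * k)) (at p)"
    and psi_v_d: "\<forall>p. (psi_v has_derivative (\<lambda>(h, k). psi_vu p * h + psi_vv p * k)) (at p)"
    and l: "l \<in> {1..N}" and lnz: "lam l \<noteq> 0"
  shows "pd l (pd l (\<lambda>y. psi (sqn N y, sqnm1 N lam y))) y =
     (let P = (sqn N y, sqnm1 N lam y); L = lam l in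
     2 * (psi_u P + psi_v P / L) + 2 * y l * ((psi_uu P * (2 * y l) + psi_uv P * (2 * y l / L))
        + (psi_vu P * (2 * y l) + psi_vv P * (2 * y l / L)) / L))"
proof -
  have pd1: "pd l (\<lambda>y. psi (sqn N y, sqnm1 N lam y)) = (\<lambda>y.
     2 * y l * (psi_u (sqn N y, sqnm1 N lam y) + psi_v (sqn N y, sqnm1 N lam y) / lam l))"
    using pd_g[of psi psi_u psi_v l N lam, OF psi_d l lnz] by blast
  define S0 where "S0 = sqn N y - (y l)^2"
  define S1 where "S1 = sqnm1 N lam y - (y l)^2 / lam l"
  have eq: "(\<lambda>t. 2 * t * (psi_u (sqn N (y(l:=t)), sqnm1 N lam (y(l:=t))) + psi_v (sqn N (y(l:=t)), sqnm1 N lam (y(l:=t))) / lam l))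
     = (\<lambda>t. 2 * t * (psi_u (S0 + t^2, S1 + t^2 / lam l) + psi_v (S0 + t^2, S1 + t^2 / lam l) / lam l))"
    using l by (simp add: sqn_upd sqnm1_upd S0_def S1_def algebra_simps)
  have du: "((\<lambda>t. psi_u (S0 + t^2, S1 + t^2 / lam l)) has_real_derivative
     (psi_uu (S0 + (y l)^2, S1 + (y l)^2 / lam l) * (2 * y l) + psi_uv (S0 + (y l)^2, S1 + (y l)^2 / lam l) * (2 * y l / lam l))) (at (y l))"
    by (rule chain2[OF psi_u_d]) (auto intro!: derivative_eq_intros simp: lnz)
  have dv: "((\<lambda>t. psi_v (S0 + t^2, S1 + t^2 / lam l)) has_real_derivative
     (psi_vu (S0 + (y l)^2, S1 + (y l)^2 / lam l) * (2 * y l) + psi_vv (S0 + (y l)^2, S1 + (y l)^2 / lam l) * (2 * y l / lam l))) (at (y l))"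
    by (rule chain2[OF psi_v_d]) (auto intro!: derivative_eq_intros simp: lnz)
  have d2: "((\<lambda>t. 2 * t) has_real_derivative 2) (at (y l))" by (auto intro!: derivative_eq_intros)
  have P: "(S0 + (y l)^2, S1 + (y l)^2 / lam l) = (sqn N y, sqnm1 N lam y)"
    by (simp add: S0_def S1_def)
  have "((\<lambda>t. 2 * t * (psi_u (S0 + t^2, S1 + t^2 / lam l) + psi_v (S0 + t^2, S1 + t^2 / lam l) / lam l)) has_real_derivative
     2 * (psi_u (S0 + (y l)^2, S1 + (y l)^2 / lam l) + psi_v (S0 + (y l)^2, S1 + (y l)^2 / lam l) / lam l)
     + 2 * y l * ((psi_uu (S0 + (y l)^2, S1 + (y l)^2 / lam l) * (2 * y l) + psi_uv (S0 + (y l)^2, S1 + (y l)^2 / lam l) * (2 * y l / lam l))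
       + (psi_vu (S0 + (y l)^2, S1 + (y l)^2 / lam l) * (2 * y l) + psi_vv (S0 + (y l)^2, S1 + (y l)^2 / lam l) * (2 * y l / lam l)) / lam l)) (at (y l))"
    by (rule DERIV_cong[OF DERIV_mult[OF d2 DERIV_add[OF du DERIV_cdivide[OF dv]]]]) simp
  then show ?thesis unfolding pd1 pd_def[of l] eq P Let_def fun_upd_same
    by (rule DERIV_imp_deriv)
qed



lemma part_u:
  fixes F A B :: "real \<times> real \<Rightarrow> real"
  assumes F: "\<forall>p. (F has_derivative (\<lambda>(h, k). A p * h + B p * k)) (at p)"
  shows "((\<lambda>s. F (s, c)) has_real_derivative A (s, c)) (at s)"
  using chain2[OF F, of "\<lambda>s. s" 1 s "\<lambda>_. c" 0] by (auto intro!: derivative_eq_intros)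

lemma part_v:
  fixes F A B :: "real \<times> real \<Rightarrow> real"
  assumes F: "\<forall>p. (F has_derivative (\<lambda>(h, k). A p * h + B p * k)) (at p)"
  shows "((\<lambda>s. F (c, s)) has_real_derivative B (c, s)) (at s)"
  using chain2[OF F, of "\<lambda>_. c" 0 s "\<lambda>s. s" 1] by (auto intro!: derivative_eq_intros)

lemma abs_aux: "\<bar>(a::real) - A\<bar> < \<bar>A - B\<bar> / 2 \<Longrightarrow> \<bar>a - B\<bar> < \<bar>A - B\<bar> / 2 \<Longrightarrow> False"
  by (simp add: abs_if split: if_splits)

lemma clairaut:
  fixes psi psi_u psi_v psi_uu psi_uv psi_vu psi_vv :: "real \<times> real \<Rightarrow> real"
  assumes psi_d: "\<forall>p. (psi has_derivative (\<lambda>(h, k). psi_u p * h + psi_v p * k)) (at p)"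
    and psi_u_d: "\<forall>p. (psi_u has_derivative (\<lambda>(h, k). psi_uu p * h + psi_uv p * k)) (at p)"
    and psi_v_d: "\<forall>p. (psi_v has_derivative (\<lambda>(h, k). psi_vu p * h + psi_vv p * k)) (at p)"
    and c1: "continuous_on UNIV psi_uv" and c2: "continuous_on UNIV psi_vu"
  shows "psi_uv p = psi_vu p"
proof -
  obtain p1 p2 where p: "p = (p1, p2)" by (cases p)
  have key: "\<exists>z w z' w'. p1 < z \<and> z < p1 + h \<and> p2 < w \<and> w < p2 + h \<and>
      p1 < z' \<and> z' < p1 + h \<and> p2 < w' \<and> w' < p2 + h \<and> psi_uv (z, w) = psi_vu (z', w')"
    if h: "h > 0" for h
  proof -
    define D where "D = psi (p1 + h, p2 + h) - psi (p1 + h, p2) - psi (p1, p2 + h) + psi (p1, p2)"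
    obtain z where z: "p1 < z" "z < p1 + h" and
      zeq: "(psi (p1 + h, p2 + h) - psi (p1 + h, p2)) - (psi (p1, p2 + h) - psi (p1, p2))
         = (p1 + h - p1) * (psi_u (z, p2 + h) - psi_u (z, p2))"
      using MVT2[of p1 "p1 + h" "\<lambda>s. psi (s, p2 + h) - psi (s, p2)" "\<lambda>s. psi_u (s, p2 + h) - psi_u (s, p2)"] h
      using DERIV_diff[OF part_u[OF psi_d] part_u[OF psi_d]] by (auto simp: algebra_simps)
    obtain w where w: "p2 < w" "w < p2 + h" and
      weq: "psi_u (z, p2 + h) - psi_u (z, p2) = (p2 + h - p2) * psi_uv (z, w)"
      using MVT2[of p2 "p2 + h" "\<lambda>s. psi_u (z, s)" "\<lambda>s. psi_uv (z, s)"] h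
      using part_v[OF psi_u_d] by (auto simp: algebra_simps)
    obtain w' where w': "p2 < w'" "w' < p2 + h" and
      w'eq: "(psi (p1 + h, p2 + h) - psi (p1, p2 + h)) - (psi (p1 + h, p2) - psi (p1, p2))
         = (p2 + h - p2) * (psi_v (p1 + h, w') - psi_v (p1, w'))"
      using MVT2[of p2 "p2 + h" "\<lambda>s. psi (p1 + h, s) - psi (p1, s)" "\<lambda>s. psi_v (p1 + h, s) - psi_v (p1, s)"] h
      using DERIV_diff[OF part_v[OF psi_d] part_v[OF psi_d]] by (auto simp: algebra_simps)
    obtain z' where z': "p1 < z'" "z' < p1 + h" and
      z'eq: "psi_v (p1 + h, w') - psi_v (p1, w') = (p1 + h - p1) * psi_vu (z', w')"
      using MVT2[of p1 "p1 + h" "\<lambda>s. psi_v (s, w')" "\<lambda>s. psi_vu (s, w')"] h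
      using part_u[OF psi_v_d] by (auto simp: algebra_simps)
    have "h * (h * psi_uv (z, w)) = h * (h * psi_vu (z', w'))"
      using zeq weq w'eq z'eq by (simp add: algebra_simps)
    then have "psi_uv (z, w) = psi_vu (z', w')" using h by simp
    then show ?thesis using z w z' w' by blast
  qed
  show ?thesis
  proof (rule ccontr)
    assume ne: "psi_uv p \<noteq> psi_vu p"
    define e where "e = \<bar>psi_uv p - psi_vu p\<bar> / 2"
    have e: "e > 0" using ne by (simp add: e_def)
    obtain d1 where d1: "d1 > 0" "\<And>q. dist q p < d1 \<Longrightarrow> dist (psi_uv q) (psi_uv p) < e"
      using c1 e unfolding continuous_on_iff by blast
    obtain d2 where d2: "d2 > 0" "\<And>q. dist q p < d2 \<Longrightarrow> dist (psi_vu q) (psi_vu p) < e"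
      using c2 e unfolding continuous_on_iff by blast
    define h where "h = min d1 d2 / 2"
    have h: "h > 0" using d1 d2 by (simp add: h_def)
    obtain z w z' w' where zw: "p1 < z" "z < p1 + h" "p2 < w" "w < p2 + h"
      "p1 < z'" "z' < p1 + h" "p2 < w'" "w' < p2 + h" and eq: "psi_uv (z, w) = psi_vu (z', w')"
      using key[OF h] by blast
    have dd: "dist (a, b) p < 2 * h" if "p1 < a" "a < p1 + h" "p2 < b" "b < p2 + h" for a b
    proof -
      have "dist (a, b) p = sqrt ((a - p1)^2 + (b - p2)^2)"
        by (simp add: p dist_Pair_Pair dist_real_def)
      also have "\<dots> \<le> \<bar>a - p1\<bar> + \<bar>b - p2\<bar>" by (rule sqrt_sum_squares_le_sum_abs)
      also have "\<dots> < 2 * h" using that by simp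
      finally show ?thesis .
    qed
    have "dist (psi_uv (z, w)) (psi_uv p) < e"
      using d1(2)[OF less_le_trans[OF dd[OF zw(1-4)]]] by (simp add: h_def)
    moreover have "dist (psi_vu (z', w')) (psi_vu p) < e"
      using d2(2)[OF less_le_trans[OF dd[OF zw(5-8)]]] by (simp add: h_def)
    ultimately show False using eq unfolding e_def dist_real_def by (metis abs_aux)
  qed
qed



lemma lam_ge1:
  fixes lam :: "nat \<Rightarrow> real"
  assumes lam1: "lam 1 = 1"
    and lam_pair: "\<forall>i\<in>{1..n}. lam (2 * i - 1) = lam (2 * i)"
    and lam_incr: "\<forall>i\<in>{1..<n}. lam (2 * i) < lam (2 * i + 1)"
  shows "\<forall>l\<in>{1..2 * n}. lam l \<ge> 1"
proof -
  have A: "1 \<le> i \<Longrightarrow> i \<le> n \<Longrightarrow> lam (2 * i - 1) \<ge> 1 \<and> lam (2 * i) \<ge> 1" for i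
  proof (induction i)
    case 0 then show ?case by simp
  next
    case (Suc j)
    show ?case
    proof (cases "j = 0")
      case True
      then show ?thesis using lam1 lam_pair Suc.prems by force
    next
      case False
      then have ih: "lam (2 * j) \<ge> 1" using Suc by simp
      have "lam (2 * j + 1) > lam (2 * j)" using lam_incr False Suc.prems by simp
      moreover have "lam (2 * Suc j - 1) = lam (2 * Suc j)"
        by (rule lam_pair[rule_format]) (use Suc.prems in simp)
      ultimately show ?thesis using ih by simp
    qed
  qed
  show ?thesis
  proof
    fix l assume l: "l \<in> {1..2 * n}"
    show "lam l \<ge> 1"
    proof (cases "even l")
      case True
      then obtain i where "l = 2 * i" by blast
      then show ?thesis using A[of i] l by auto
    next
      case False
      then obtain i where "l = 2 * i + 1" using oddE by blast
      then show ?thesis using A[of "i + 1"] l by auto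
    qed
  qed
qed

lemma ifz: "(if b then x else 0) * (y::real) = (if b then x * y else 0)" by simp

lemma vf_T_zero:
  fixes psi psi_u psi_v :: "real \<times> real \<Rightarrow> real"
  assumes psi_d: "\<forall>p. (psi has_derivative (\<lambda>(h, k). psi_u p * h + psi_v p * k)) (at p)"
    and lnz: "\<forall>l\<in>{1..N}. lam l \<noteq> 0"
    and k: "k \<in> {1..N}" and l: "l \<in> {1..N}" and m: "m \<in> {1..N}"
  shows "vf_apply N (Tfield lam k l m) (\<lambda>y. psi (sqn N y, sqnm1 N lam y)) y = 0"
proof -
  let ?U = "psi_u (sqn N y, sqnm1 N lam y)" and ?V = "psi_v (sqn N y, sqnm1 N lam y)"
  have pd: "\<And>c. c \<in> {1..N} \<Longrightarrow> pd c (\<lambda>y. psi (sqn N y, sqnm1 N lam y)) y = 2 * y c * (?U + ?V / lam c)"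
    using pd_g[OF psi_d] lnz by blast
  have "vf_apply N (Tfield lam k l m) (\<lambda>y. psi (sqn N y, sqnm1 N lam y)) y
     = (\<Sum>c\<in>{1..N}. (if c = m then y k * y l * (1 / lam k - 1 / lam l) * (2 * y c * (?U + ?V / lam c)) else 0)
        + (if c = k then y l * y m * (1 / lam l - 1 / lam m) * (2 * y c * (?U + ?V / lam c)) else 0)
        + (if c = l then y m * y k * (1 / lam m - 1 / lam k) * (2 * y c * (?U + ?V / lam c)) else 0))"
    unfolding vf_apply_def Tfield_def by (rule sum.cong[OF refl]) (simp only: pd distrib_right ifz)
  also have "\<dots> = y k * y l * (1 / lam k - 1 / lam l) * (2 * y m * (?U + ?V / lam m))
     + y l * y m * (1 / lam l - 1 / lam m) * (2 * y k * (?U + ?V / lam k))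
     + y m * y k * (1 / lam m - 1 / lam k) * (2 * y l * (?U + ?V / lam l))"
    by (simp only: sum.distrib sum.delta finite_atLeastAtMost k l m if_True)
  also have "\<dots> = 0"
    using lnz k l m by (simp add: field_simps)
  finally show ?thesis .
qed

lemma vf_R_zero:
  fixes psi psi_u psi_v :: "real \<times> real \<Rightarrow> real"
  assumes psi_d: "\<forall>p. (psi has_derivative (\<lambda>(h, k). psi_u p * h + psi_v p * k)) (at p)"
    and lnz: "\<forall>l\<in>{1..2 * n}. lam l \<noteq> 0"
    and lam_pair: "\<forall>i\<in>{1..n}. lam (2 * i - 1) = lam (2 * i)"
    and i: "i \<in> {1..n}"
  shows "vf_apply (2 * n) (Rfield i) (\<lambda>y. psi (sqn (2 * n) y, sqnm1 (2 * n) lam y)) y = 0"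
proof -
  let ?N = "2 * n"
  let ?U = "psi_u (sqn ?N y, sqnm1 ?N lam y)" and ?V = "psi_v (sqn ?N y, sqnm1 ?N lam y)"
  have pd: "\<And>c. c \<in> {1..?N} \<Longrightarrow> pd c (\<lambda>y. psi (sqn ?N y, sqnm1 ?N lam y)) y = 2 * y c * (?U + ?V / lam c)"
    using pd_g[OF psi_d] lnz by blast
  have i1: "2 * i - 1 \<in> {1..?N}" and i2: "2 * i \<in> {1..?N}" using i by auto
  have "vf_apply ?N (Rfield i) (\<lambda>y. psi (sqn ?N y, sqnm1 ?N lam y)) y
     = (\<Sum>c\<in>{1..?N}. (if c = 2 * i - 1 then y (2 * i) * (2 * y c * (?U + ?V / lam c)) else 0)
        - (if c = 2 * i then y (2 * i - 1) * (2 * y c * (?U + ?V / lam c)) else 0))"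
    unfolding vf_apply_def Rfield_def by (rule sum.cong[OF refl]) (simp only: pd left_diff_distrib ifz)
  also have "\<dots> = y (2 * i) * (2 * y (2 * i - 1) * (?U + ?V / lam (2 * i - 1)))
      - y (2 * i - 1) * (2 * y (2 * i) * (?U + ?V / lam (2 * i)))"
    by (simp only: sum_subtractf sum.delta finite_atLeastAtMost i1 i2 if_True)
  also have "\<dots> = 0" using lam_pair i by (simp add: algebra_simps)
  finally show ?thesis .
qed

lemma vf_zero_fun: "vf_apply N Z (\<lambda>_. 0) x = 0"
  unfolding vf_apply_def pd_def by simp



lemma Ltil_formula:
  fixes psi psi_u psi_v psi_uu psi_uv psi_vu psi_vv :: "real \<times> real \<Rightarrow> real"
  assumes psi_d: "\<forall>p. (psi has_derivative (\<lambda>(h, k). psi_u p * h + psi_v p * k)) (at p)"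
    and psi_u_d: "\<forall>p. (psi_u has_derivative (\<lambda>(h, k). psi_uu p * h + psi_uv p * k)) (at p)"
    and psi_v_d: "\<forall>p. (psi_v has_derivative (\<lambda>(h, k). psi_vu p * h + psi_vv p * k)) (at p)"
    and sym: "\<forall>p. psi_vu p = psi_uv p"
    and lnz: "\<forall>l\<in>{1..N}. lam l \<noteq> 0"
  shows "Ltil N lam a delta (\<lambda>y. psi (sqn N y, sqnm1 N lam y)) x =
             2 * a * ((\<Sum>l\<in>{1..N}. lam l * (1 + delta l) * (x l)\<^sup>2) * psi_uu (sqn N x, sqnm1 N lam x)
                     + 2 * (\<Sum>l\<in>{1..N}. (1 + delta l) * (x l)\<^sup>2) * psi_uv (sqn N x, sqnm1 N lam x)
                     + (\<Sum>l\<in>{1..N}. 1 / lam l * (1 + delta l) * (x l)\<^sup>2) * psi_vv (sqn N x, sqnm1 N lam x))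
           + (a * (\<Sum>l\<in>{1..N}. lam l * (1 + delta l)) - 2 * (\<Sum>l\<in>{1..N}. lam l * (x l)\<^sup>2)) * psi_u (sqn N x, sqnm1 N lam x)
           + (a * (\<Sum>l\<in>{1..N}. 1 + delta l) - 2 * (\<Sum>l\<in>{1..N}. (x l)\<^sup>2)) * psi_v (sqn N x, sqnm1 N lam x)"
  (is "?L = ?R")
proof -
  define P where "P = (sqn N x, sqnm1 N lam x)"
  define U where "U = psi_u P"
  define V where "V = psi_v P"
  define Uu where "Uu = psi_uu P"
  define Uv where "Uv = psi_uv P"
  define Vv where "Vv = psi_vv P"
  have "?L = (\<Sum>l\<in>{1..N}. lam l * (a / 2 * (1 + delta l) *
      (2 * (U + V / lam l) + 2 * x l * ((Uu * (2 * x l) + Uv * (2 * x l / lam l))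
        + (Uv * (2 * x l) + Vv * (2 * x l / lam l)) / lam l))
      - x l * (2 * x l * (U + V / lam l))))"
    unfolding Ltil_def
    apply (rule sum.cong[OF refl])
    apply (subst pdpd_g[OF psi_d psi_u_d psi_v_d], assumption, use lnz in blast)
    apply (subst pd_g[OF psi_d], assumption, use lnz in blast)
    apply (simp add: Let_def sym P_def U_def V_def Uu_def Uv_def Vv_def)
    done
  also have "\<dots> = (\<Sum>l\<in>{1..N}.
       2 * a * (lam l * (1 + delta l) * (x l)\<^sup>2 * Uu + 2 * ((1 + delta l) * (x l)\<^sup>2) * Uv
         + 1 / lam l * (1 + delta l) * (x l)\<^sup>2 * Vv)
       + (a * (lam l * (1 + delta l)) - 2 * (lam l * (x l)\<^sup>2)) * U
       + (a * (1 + delta l) - 2 * (x l)\<^sup>2) * V)"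
    apply (rule sum.cong[OF refl])
    subgoal for l using lnz[rule_format, of l] by (simp add: field_simps power2_eq_square)
    done
  also have "\<dots> = ?R"
    unfolding P_def[symmetric] U_def[symmetric] V_def[symmetric] Uu_def[symmetric] Uv_def[symmetric] Vv_def[symmetric]
    by (simp add: sum.distrib sum_subtractf sum_distrib_left sum_distrib_right algebra_simps)
  finally show ?thesis .
qed



lemma Leps_eq:
  fixes psi psi_u psi_v :: "real \<times> real \<Rightarrow> real" and b :: vfield
  assumes psi_d: "\<forall>p. (psi has_derivative (\<lambda>(h, k). psi_u p * h + psi_v p * k)) (at p)"
    and lnz: "\<forall>l\<in>{1..2 * n}. lam l \<noteq> 0"
    and lam_pair: "\<forall>i\<in>{1..n}. lam (2 * i - 1) = lam (2 * i)"
    and b_orth: "\<forall>x. (\<Sum>l\<in>{1..2 * n}. x l * b l x) = 0"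
    and b_orth1: "\<forall>x. (\<Sum>l\<in>{1..2 * n}. x l * b l x / lam l) = 0"
  shows "Leps n lam a delta b kappa eps (\<lambda>y. psi (sqn (2 * n) y, sqnm1 (2 * n) lam y)) x
       = Ltil (2 * n) lam a delta (\<lambda>y. psi (sqn (2 * n) y, sqnm1 (2 * n) lam y)) x"
proof -
  let ?N = "2 * n"
  let ?g = "\<lambda>y. psi (sqn ?N y, sqnm1 ?N lam y)"
  let ?U = "psi_u (sqn ?N x, sqnm1 ?N lam x)" and ?V = "psi_v (sqn ?N x, sqnm1 ?N lam x)"
  have "vf_apply ?N b ?g x = (\<Sum>c\<in>{1..?N}. b c x * (2 * x c * (?U + ?V / lam c)))"
    unfolding vf_apply_def by (rule sum.cong[OF refl]) (use pd_g[OF psi_d] lnz in auto)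
  also have "\<dots> = 2 * ?U * (\<Sum>c\<in>{1..?N}. x c * b c x) + 2 * ?V * (\<Sum>c\<in>{1..?N}. x c * b c x / lam c)"
  proof -
    have "(\<Sum>c\<in>{1..?N}. b c x * (2 * x c * (?U + ?V / lam c)))
        = (\<Sum>c\<in>{1..?N}. 2 * ?U * (x c * b c x) + 2 * ?V * (x c * b c x / lam c))"
      by (rule sum.cong[OF refl]) (simp add: algebra_simps)
    then show ?thesis by (simp only: sum.distrib sum_distrib_left)
  qed
  also have "\<dots> = 0" using b_orth b_orth1 by simp
  finally have B: "vf_apply ?N b ?g x = 0" .
  have T: "vf_apply ?N (Tfield lam k l m) ?g = (\<lambda>_. 0)" if "(k, l, m) \<in> Jset ?N lam" for k l m
    using that vf_T_zero[OF psi_d lnz] unfolding Jset_def by auto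
  have R: "vf_apply ?N (Rfield i) ?g = (\<lambda>_. 0)" if "i \<in> {1..n}" for i
    using that vf_R_zero[OF psi_d lnz lam_pair] by auto
  have D: "Dop n lam ?g x = 0"
  proof -
    have s1: "(\<Sum>(k, l, m)\<in>Jset ?N lam. vf_apply ?N (Tfield lam k l m) (vf_apply ?N (Tfield lam k l m) ?g) x) = 0"
      by (rule sum.neutral) (auto simp: T vf_zero_fun)
    have s2: "(\<Sum>i\<in>{1..n}. vf_apply ?N (Rfield i) (vf_apply ?N (Rfield i) ?g) x) = 0"
      by (rule sum.neutral) (simp add: R vf_zero_fun)
    show ?thesis unfolding Dop_def s1 s2 by simp
  qed
  show ?thesis unfolding Leps_def B D by simp
qed


theorem lemma1p2:
  fixes n :: nat and lam delta :: "nat \<Rightarrow> real" and a kappa :: real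
    and b :: vfield
    and psi psi_u psi_v psi_uu psi_uv psi_vu psi_vv :: "real \<times> real \<Rightarrow> real"
  assumes n4: "n \<ge> 4"
    and lam1: "lam 1 = 1"
    and lam_pair: "\<forall>i\<in>{1..n}. lam (2 * i - 1) = lam (2 * i)"
    and lam_incr: "\<forall>i\<in>{1..<n}. lam (2 * i) < lam (2 * i + 1)"
    and a_pos: "a > 0"
    and delta_rng: "\<forall>l\<in>{1..2 * n}. -1 < delta l \<and> delta l \<le> 0"
    and delta_pair: "\<forall>i\<in>{1..n}. delta (2 * i) = delta (2 * i - 1)"
    and b_quad: "\<exists>Q :: nat \<Rightarrow> nat \<Rightarrow> nat \<Rightarrow> real. \<forall>l\<in>{1..2 * n}. \<forall>x.
                   b l x = (\<Sum>j\<in>{1..2 * n}. \<Sum>k\<in>{1..2 * n}. Q l j k * x j * x k)"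
    and b_div: "\<forall>x. (\<Sum>l\<in>{1..2 * n}. pd l (b l) x) = 0"
    and b_orth: "\<forall>x. (\<Sum>l\<in>{1..2 * n}. x l * b l x) = 0"
    and b_orth1: "\<forall>x. (\<Sum>l\<in>{1..2 * n}. x l * b l x / lam l) = 0"
    and kappa: "0 < kappa" "kappa \<le> 1"
    and psi_d: "\<forall>p. (psi has_derivative (\<lambda>(h, k). psi_u p * h + psi_v p * k)) (at p)"
    and psi_u_d: "\<forall>p. (psi_u has_derivative (\<lambda>(h, k). psi_uu p * h + psi_uv p * k)) (at p)"
    and psi_v_d: "\<forall>p. (psi_v has_derivative (\<lambda>(h, k). psi_vu p * h + psi_vv p * k)) (at p)"
    and psi_C2: "continuous_on UNIV psi_uu" "continuous_on UNIV psi_uv"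
                "continuous_on UNIV psi_vu" "continuous_on UNIV psi_vv"
  shows
    "(\<forall>eps>0. \<forall>x.
        let g = (\<lambda>y. psi (sqn (2 * n) y, sqnm1 (2 * n) lam y));
            p = (sqn (2 * n) x, sqnm1 (2 * n) lam x)
        in Leps n lam a delta b kappa eps g x = Ltil (2 * n) lam a delta g x
         \<and> Ltil (2 * n) lam a delta g x =
             2 * a * ((\<Sum>l\<in>{1..2 * n}. lam l * (1 + delta l) * (x l)\<^sup>2) * psi_uu p
                     + 2 * (\<Sum>l\<in>{1..2 * n}. (1 + delta l) * (x l)\<^sup>2) * psi_uv p
                     + (\<Sum>l\<in>{1..2 * n}. 1 / lam l * (1 + delta l) * (x l)\<^sup>2) * psi_vv p)
           + (a * (\<Sum>l\<in>{1..2 * n}. lam l * (1 + delta l)) - 2 * (\<Sum>l\<in>{1..2 * n}. lam l * (x l)\<^sup>2)) * psi_u p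
           + (a * (\<Sum>l\<in>{1..2 * n}. 1 + delta l) - 2 * (\<Sum>l\<in>{1..2 * n}. (x l)\<^sup>2)) * psi_v p)
     \<and> (\<forall>eps>0. \<forall>x.
        let g0 = (\<lambda>y. exp (sqnm1 (2 * n) lam y / (2 * a)))
        in Leps n lam a delta b kappa eps g0 x
             \<le> (a * real (2 * n) - sqn (2 * n) x) / (2 * a) * exp (sqnm1 (2 * n) lam x / (2 * a))
         \<and> (a * real (2 * n) - sqn (2 * n) x) / (2 * a) * exp (sqnm1 (2 * n) lam x / (2 * a))
             \<le> real (2 * n) / 2 * exp (real (2 * n) / 2))"
proof -
  let ?N = "2 * n"
  have lge: "\<forall>l\<in>{1..?N}. lam l \<ge> 1" by (rule lam_ge1[OF lam1 lam_pair lam_incr])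
  then have lnz: "\<forall>l\<in>{1..?N}. lam l \<noteq> 0" by force
  have sym: "\<forall>p. psi_vu p = psi_uv p"
    using clairaut[OF psi_d psi_u_d psi_v_d psi_C2(2) psi_C2(3)] by metis
  have part1: "\<forall>eps>0. \<forall>x.
        let g = (\<lambda>y. psi (sqn (2 * n) y, sqnm1 (2 * n) lam y));
            p = (sqn (2 * n) x, sqnm1 (2 * n) lam x)
        in Leps n lam a delta b kappa eps g x = Ltil (2 * n) lam a delta g x
         \<and> Ltil (2 * n) lam a delta g x =
             2 * a * ((\<Sum>l\<in>{1..2 * n}. lam l * (1 + delta l) * (x l)\<^sup>2) * psi_uu p
                     + 2 * (\<Sum>l\<in>{1..2 * n}. (1 + delta l) * (x l)\<^sup>2) * psi_uv p
                     + (\<Sum>l\<in>{1..2 * n}. 1 / lam l * (1 + delta l) * (x l)\<^sup>2) * psi_vv p)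
           + (a * (\<Sum>l\<in>{1..2 * n}. lam l * (1 + delta l)) - 2 * (\<Sum>l\<in>{1..2 * n}. lam l * (x l)\<^sup>2)) * psi_u p
           + (a * (\<Sum>l\<in>{1..2 * n}. 1 + delta l) - 2 * (\<Sum>l\<in>{1..2 * n}. (x l)\<^sup>2)) * psi_v p"
    unfolding Let_def
    using Leps_eq[OF psi_d lnz lam_pair b_orth b_orth1]
      Ltil_formula[OF psi_d psi_u_d psi_v_d sym lnz] by blast
  define E where "E = (\<lambda>q::real \<times> real. exp (snd q / (2 * a)))"
  define Ev where "Ev = (\<lambda>q::real \<times> real. exp (snd q / (2 * a)) / (2 * a))"
  define Evv where "Evv = (\<lambda>q::real \<times> real. exp (snd q / (2 * a)) / (2 * a) / (2 * a))"
  define Z where "Z = (\<lambda>q::real \<times> real. 0::real)"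
  have a0: "a \<noteq> 0" using a_pos by simp
  have E_d: "\<forall>p. (E has_derivative (\<lambda>(h, k). Z p * h + Ev p * k)) (at p)"
  proof
    fix p :: "real \<times> real"
    show "(E has_derivative (\<lambda>(h, k). Z p * h + Ev p * k)) (at p)"
      unfolding E_def Z_def Ev_def
      by (rule has_derivative_eq_rhs, (auto intro!: derivative_eq_intros)[1]) (auto simp: fun_eq_iff a0)
  qed
  have Z_d: "\<forall>p. (Z has_derivative (\<lambda>(h, k). Z p * h + Z p * k)) (at p)"
    unfolding Z_def by (auto intro!: derivative_eq_intros simp: fun_eq_iff case_prod_beta)
  have Ev_d: "\<forall>p. (Ev has_derivative (\<lambda>(h, k). Z p * h + Evv p * k)) (at p)"
  proof
    fix p :: "real \<times> real"
    show "(Ev has_derivative (\<lambda>(h, k). Z p * h + Evv p * k)) (at p)"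
      unfolding Evv_def Z_def Ev_def
      by (rule has_derivative_eq_rhs, (auto intro!: derivative_eq_intros)[1]) (auto simp: fun_eq_iff a0)
  qed
  have symZ: "\<forall>p. Z p = Z p" by simp
  have part2: "\<forall>eps>0. \<forall>x.
        let g0 = (\<lambda>y. exp (sqnm1 (2 * n) lam y / (2 * a)))
        in Leps n lam a delta b kappa eps g0 x
             \<le> (a * real (2 * n) - sqn (2 * n) x) / (2 * a) * exp (sqnm1 (2 * n) lam x / (2 * a))
         \<and> (a * real (2 * n) - sqn (2 * n) x) / (2 * a) * exp (sqnm1 (2 * n) lam x / (2 * a))
             \<le> real (2 * n) / 2 * exp (real (2 * n) / 2)"
  proof (intro allI impI)
    fix eps :: real and x :: pt
    assume "eps > 0"
    have geq: "(\<lambda>y. exp (sqnm1 (2 * n) lam y / (2 * a))) = (\<lambda>y. E (sqn ?N y, sqnm1 ?N lam y))"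
      by (simp add: E_def)
    define S where "S = sqn ?N x"
    define T where "T = sqnm1 ?N lam x"
    define X where "X = exp (T / (2 * a))"
    have X0: "X > 0" by (simp add: X_def)
    have L: "Leps n lam a delta b kappa eps (\<lambda>y. exp (sqnm1 (2 * n) lam y / (2 * a))) x
      = 2 * a * ((\<Sum>l\<in>{1..?N}. 1 / lam l * (1 + delta l) * (x l)\<^sup>2) * (X / (2 * a) / (2 * a)))
        + (a * (\<Sum>l\<in>{1..?N}. 1 + delta l) - 2 * S) * (X / (2 * a))"
      unfolding geq Leps_eq[OF E_d lnz lam_pair b_orth b_orth1]
        Ltil_formula[OF E_d Z_d Ev_d symZ lnz]
      by (simp add: Z_def Evv_def Ev_def X_def T_def S_def sqn_def)
    have s1: "(\<Sum>l\<in>{1..?N}. 1 / lam l * (1 + delta l) * (x l)\<^sup>2) \<le> S"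
      unfolding S_def sqn_def
    proof (rule sum_mono)
      fix l assume l: "l \<in> {1..?N}"
      have ll: "lam l \<ge> 1" using lge l by blast
      have f1: "1 / lam l \<le> 1" "0 < 1 / lam l" using ll by auto
      have dl: "-1 < delta l \<and> delta l \<le> 0" using delta_rng l by blast
      have f2: "1 + delta l \<le> 1" "0 < 1 + delta l" using dl by auto
      have "1 / lam l * (1 + delta l) \<le> 1"
        using mult_le_one[OF f1(1) _ f2(1)] f2(2) by simp
      then show "1 / lam l * (1 + delta l) * (x l)\<^sup>2 \<le> (x l)\<^sup>2"
        using mult_right_mono[of "1 / lam l * (1 + delta l)" 1 "(x l)^2"] by (simp only: mult_1_left zero_le_power2)
    qed
    have s2: "(\<Sum>l\<in>{1..?N}. 1 + delta l) \<le> real ?N"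
    proof -
      have "(\<Sum>l\<in>{1..?N}. 1 + delta l) \<le> (\<Sum>l\<in>{1..?N}. (1::real))"
        by (rule sum_mono) (use delta_rng in auto)
      then show ?thesis by simp
    qed
    have "Leps n lam a delta b kappa eps (\<lambda>y. exp (sqnm1 (2 * n) lam y / (2 * a))) x
       = X / (2 * a) * ((\<Sum>l\<in>{1..?N}. 1 / lam l * (1 + delta l) * (x l)\<^sup>2) + a * (\<Sum>l\<in>{1..?N}. 1 + delta l) - 2 * S)"
      unfolding L using a0 by (simp add: field_simps)
    also have "\<dots> \<le> X / (2 * a) * (S + a * real ?N - 2 * S)"
    proof (rule mult_left_mono)
      have "a * (\<Sum>l\<in>{1..?N}. 1 + delta l) \<le> a * real ?N"
        using mult_left_mono[OF s2, of a] a_pos by simp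
      then show "(\<Sum>l\<in>{1..?N}. 1 / lam l * (1 + delta l) * (x l)\<^sup>2) + a * (\<Sum>l\<in>{1..?N}. 1 + delta l) - 2 * S
          \<le> S + a * real ?N - 2 * S" using s1 by linarith
      show "0 \<le> X / (2 * a)" using a_pos X0 by simp
    qed
    also have "\<dots> = (a * real (2 * n) - sqn (2 * n) x) / (2 * a) * exp (sqnm1 (2 * n) lam x / (2 * a))"
      by (simp add: X_def T_def S_def field_simps)
    finally have I1: "Leps n lam a delta b kappa eps (\<lambda>y. exp (sqnm1 (2 * n) lam y / (2 * a))) x
      \<le> (a * real (2 * n) - sqn (2 * n) x) / (2 * a) * exp (sqnm1 (2 * n) lam x / (2 * a))" .
    have TS: "T \<le> S"
      unfolding T_def S_def sqnm1_def sqn_def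
    proof (rule sum_mono)
      fix l assume l: "l \<in> {1..?N}"
      have "(x l)^2 / lam l \<le> (x l)^2 / 1"
        by (rule divide_left_mono) (use lge l in force)+
      then show "(x l)\<^sup>2 / lam l \<le> (x l)\<^sup>2" by simp
    qed
    have I2: "(a * real ?N - S) / (2 * a) * X \<le> real ?N / 2 * exp (real ?N / 2)"
    proof (cases "S \<le> a * real ?N")
      case True
      have "T / (2 * a) \<le> real ?N / 2"
        using TS True a_pos by (simp add: field_simps)
      then have "X \<le> exp (real ?N / 2)" unfolding X_def by simp
      moreover have "(a * real ?N - S) / (2 * a) \<le> real ?N / 2"
        using a_pos S_def sqn_def by (simp add: field_simps sqn_def sum_nonneg)
      moreover have "0 \<le> (a * real ?N - S) / (2 * a)" using True a_pos by simp
      ultimately show ?thesis using X0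
        by (meson less_imp_le mult_mono order_trans exp_ge_zero)
    next
      case False
      then have "(a * real ?N - S) / (2 * a) * X \<le> 0"
        using a_pos X0 by (simp add: mult_nonpos_nonneg divide_nonpos_pos)
      also have "0 \<le> real ?N / 2 * exp (real ?N / 2)" by simp
      finally show ?thesis .
    qed
    show "let g0 = (\<lambda>y. exp (sqnm1 (2 * n) lam y / (2 * a)))
        in Leps n lam a delta b kappa eps g0 x
             \<le> (a * real (2 * n) - sqn (2 * n) x) / (2 * a) * exp (sqnm1 (2 * n) lam x / (2 * a))
         \<and> (a * real (2 * n) - sqn (2 * n) x) / (2 * a) * exp (sqnm1 (2 * n) lam x / (2 * a))
             \<le> real (2 * n) / 2 * exp (real (2 * n) / 2)"
      unfolding Let_def using I1 I2 by (simp add: X_def T_def S_def)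
  qed
  show ?thesis using part1 part2 by blast
qed


end
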